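(* Let $(X,\mathfrak{m})$ be a measurable space with $\mathfrak{m}$ an infinite $\sigma$-algebra containing every finite subset of $X$, and let $X^*=\mathfrak{m}^\beta\setminus e(X)$. Then every countable union of nowhere dense subsets of $X^*$ is nowhere dense in $X^*$.
   Context: An $\mathfrak{m}$-filter is a family $p\subseteq\mathfrak{m}$ with $\emptyset\notin p$, $X\in p$, closed under supersets belonging to $\mathfrak{m}$ and under finite intersections; an $\mathfrak{m}$-ultrafilter is a maximal $\mathfrak{m}$-filter; $\mathfrak{m}^\beta$ is the set of all $\mathfrak{m}$-ultrafilters, topologized by the base $\{\widehat{A}:A\in\mathfrak{m}\}$ where $\widehat{A}=\{p\in\mathfrak{m}^\beta:A\in p\}$. The map $e:X\to\mathfrak{m}^\beta$ is $e(x)=\{A\in\mathfrak{m}:x\in A\}$. $X^*$ carries the subspace topology. *)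

theory Defs
  imports "HOL-Analysis.Analysis"
begin

definition m_filter :: "'a set \<Rightarrow> 'a set set \<Rightarrow> 'a set set \<Rightarrow> bool" where
  "m_filter X M p \<longleftrightarrow> p \<subseteq> M \<and> {} \<notin> p \<and> X \<in> p
     \<and> (\<forall>A\<in>p. \<forall>B\<in>M. A \<subseteq> B \<longrightarrow> B \<in> p)
     \<and> (\<forall>A\<in>p. \<forall>B\<in>p. A \<inter> B \<in> p)"

definition m_ultrafilter :: "'a set \<Rightarrow> 'a set set \<Rightarrow> 'a set set \<Rightarrow> bool" where
  "m_ultrafilter X M p \<longleftrightarrow> m_filter X M p \<and> (\<forall>q. m_filter X M q \<and> p \<subseteq> q \<longrightarrow> q = p)"

definition mbeta :: "'a set \<Rightarrow> 'a set set \<Rightarrow> 'a set set set" where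
  "mbeta X M = {p. m_ultrafilter X M p}"

definition mhat :: "'a set \<Rightarrow> 'a set set \<Rightarrow> 'a set \<Rightarrow> 'a set set set" where
  "mhat X M A = {p \<in> mbeta X M. A \<in> p}"

definition mbeta_topology :: "'a set \<Rightarrow> 'a set set \<Rightarrow> 'a set set topology" where
  "mbeta_topology X M = topology_generated_by {mhat X M A | A. A \<in> M}"

definition membed :: "'a set set \<Rightarrow> 'a \<Rightarrow> 'a set set" where
  "membed M x = {A \<in> M. x \<in> A}"

definition Xstar :: "'a set \<Rightarrow> 'a set set \<Rightarrow> 'a set set set" where
  "Xstar X M = mbeta X M - membed M ` X"

definition Xstar_topology :: "'a set \<Rightarrow> 'a set set \<Rightarrow> 'a set set topology" where
  "Xstar_topology X M = subtopology (mbeta_topology X M) (Xstar X M)"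

definition nowhere_dense :: "'b topology \<Rightarrow> 'b set \<Rightarrow> bool" where
  "nowhere_dense T S \<longleftrightarrow> S \<subseteq> topspace T \<and> T interior_of (T closure_of S) = {}"

end

theory Submission
  imports Defs
begin

context
  fixes X :: "'a set" and M :: "'a set set"
  assumes sa: "sigma_algebra X M"
begin

interpretation S: sigma_algebra X M by (rule sa)

lemma uf_filter: "m_ultrafilter X M p \<Longrightarrow> m_filter X M p"
  unfolding m_ultrafilter_def by blast

lemma mf_M: "m_filter X M p \<Longrightarrow> A \<in> p \<Longrightarrow> A \<in> M"
  unfolding m_filter_def by (elim conjE) (erule subsetD)

lemma mf_empty: "m_filter X M p \<Longrightarrow> {} \<notin> p"
  unfolding m_filter_def by (elim conjE)

lemma mf_top: "m_filter X M p \<Longrightarrow> X \<in> p"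
  unfolding m_filter_def by (elim conjE)

lemma mf_up: "m_filter X M p \<Longrightarrow> A \<in> p \<Longrightarrow> B \<in> M \<Longrightarrow> A \<subseteq> B \<Longrightarrow> B \<in> p"
  unfolding m_filter_def by (elim conjE) (drule bspec, assumption, drule bspec, assumption, erule mp)

lemma mf_int: "m_filter X M p \<Longrightarrow> A \<in> p \<Longrightarrow> B \<in> p \<Longrightarrow> A \<inter> B \<in> p"
  unfolding m_filter_def by (elim conjE) (drule bspec, assumption, drule bspec, assumption)

lemma mf_intro:
  assumes "p \<subseteq> M" "{} \<notin> p" "X \<in> p" "\<And>A B. A \<in> p \<Longrightarrow> B \<in> M \<Longrightarrow> A \<subseteq> B \<Longrightarrow> B \<in> p"
    "\<And>A B. A \<in> p \<Longrightarrow> B \<in> p \<Longrightarrow> A \<inter> B \<in> p"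
  shows "m_filter X M p"
  unfolding m_filter_def using assms by (intro conjI ballI impI) auto

lemma uf_max: "m_ultrafilter X M p \<Longrightarrow> m_filter X M q \<Longrightarrow> p \<subseteq> q \<Longrightarrow> q = p"
  unfolding m_ultrafilter_def by (elim conjE) (drule spec, erule mp, intro conjI)

lemma uf_compl:
  assumes u: "m_ultrafilter X M p" and A: "A \<in> M" and nA: "A \<notin> p"
  shows "X - A \<in> p"
proof -
  have f: "m_filter X M p" using u by (rule uf_filter)
  define q where "q = {C\<in>M. \<exists>P\<in>p. P \<inter> (X - A) \<subseteq> C}"
  have XA: "X - A \<in> M" using A by (rule S.Diff[OF S.top])
  have "m_filter X M q"
  proof (rule mf_intro)
    show "q \<subseteq> M" unfolding q_def by blast
  next
    show "{} \<notin> q"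
    proof
      assume "{} \<in> q"
      then obtain P where P: "P \<in> p" "P \<inter> (X - A) \<subseteq> {}" unfolding q_def by blast
      have "P \<subseteq> X" using S.sets_into_space[OF mf_M[OF f P(1)]] .
      hence "P \<subseteq> A" using P(2) by blast
      hence "A \<in> p" using mf_up[OF f P(1) A] by blast
      thus False using nA by simp
    qed
  next
    have "X \<inter> (X - A) \<subseteq> X" by blast
    thus "X \<in> q" unfolding q_def using mf_top[OF f] S.top by blast
  next
    fix C D assume "C \<in> q" "D \<in> M" "C \<subseteq> D"
    thus "D \<in> q" unfolding q_def by blast
  next
    fix C D assume C: "C \<in> q" and D: "D \<in> q"
    then obtain P Q where PQ: "P \<in> p" "P \<inter> (X - A) \<subseteq> C" "Q \<in> p" "Q \<inter> (X - A) \<subseteq> D"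
      unfolding q_def by blast
    have "P \<inter> Q \<in> p" using mf_int[OF f PQ(1,3)] .
    moreover have "C \<inter> D \<in> M" using C D unfolding q_def by blast
    moreover have "(P \<inter> Q) \<inter> (X - A) \<subseteq> C \<inter> D" using PQ by blast
    ultimately show "C \<inter> D \<in> q" unfolding q_def by blast
  qed
  moreover have "p \<subseteq> q"
  proof
    fix C assume "C \<in> p"
    moreover have "C \<inter> (X - A) \<subseteq> C" by blast
    ultimately show "C \<in> q" unfolding q_def using mf_M[OF f] by blast
  qed
  ultimately have "q = p" by (rule uf_max[OF u])
  moreover have "X - A \<in> q" unfolding q_def using XA mf_top[OF f] by blast
  ultimately show ?thesis by simp
qed

lemma uf_prime:
  assumes u: "m_ultrafilter X M p" and A: "A \<in> M" and B: "B \<in> M" and AB: "A \<union> B \<in> p"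
  shows "A \<in> p \<or> B \<in> p"
proof (rule ccontr)
  assume nn: "\<not> (A \<in> p \<or> B \<in> p)"
  hence "X - A \<in> p" using uf_compl[OF u A] by blast
  have f: "m_filter X M p" using u by (rule uf_filter)
  have "(A \<union> B) \<inter> (X - A) \<in> p" using mf_int[OF f AB \<open>X - A \<in> p\<close>] .
  moreover have "(A \<union> B) \<inter> (X - A) \<subseteq> B" by blast
  ultimately have "B \<in> p" using mf_up[OF f _ B] by blast
  thus False using nn by blast
qed

lemma mhat_Int:
  assumes A: "A \<in> M" and B: "B \<in> M"
  shows "mhat X M (A \<inter> B) = mhat X M A \<inter> mhat X M B"
proof (intro equalityI subsetI)
  fix p assume p: "p \<in> mhat X M (A \<inter> B)"
  hence u: "m_ultrafilter X M p" and ab: "A \<inter> B \<in> p" unfolding mhat_def mbeta_def by auto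
  have f: "m_filter X M p" using u by (rule uf_filter)
  have "A \<in> p" by (rule mf_up[OF f ab A]) blast
  moreover have "B \<in> p" by (rule mf_up[OF f ab B]) blast
  ultimately show "p \<in> mhat X M A \<inter> mhat X M B" using p unfolding mhat_def by blast
next
  fix p assume p: "p \<in> mhat X M A \<inter> mhat X M B"
  hence u: "m_ultrafilter X M p" and a: "A \<in> p" and b: "B \<in> p" unfolding mhat_def mbeta_def by auto
  have f: "m_filter X M p" using u by (rule uf_filter)
  have "A \<inter> B \<in> p" by (rule mf_int[OF f a b])
  thus "p \<in> mhat X M (A \<inter> B)" using p unfolding mhat_def by blast
qed

lemma topspace_mbeta: "topspace (mbeta_topology X M) = mbeta X M"
proof -
  have "mhat X M X = mbeta X M"
    unfolding mhat_def using mf_top[OF uf_filter] unfolding mbeta_def by blast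
  moreover have "mhat X M A \<subseteq> mbeta X M" for A unfolding mhat_def by blast
  ultimately show ?thesis unfolding mbeta_topology_def topology_generated_by_topspace
    using S.top by blast
qed

lemma topspace_Xstar: "topspace (Xstar_topology X M) = Xstar X M"
  unfolding Xstar_topology_def using topspace_mbeta by (auto simp: Xstar_def)

lemma basic_open: "A \<in> M \<Longrightarrow> openin (Xstar_topology X M) (mhat X M A \<inter> Xstar X M)"
proof -
  assume A: "A \<in> M"
  have "mhat X M A \<in> {mhat X M A | A. A \<in> M}" using A by blast
  hence "openin (mbeta_topology X M) (mhat X M A)"
    unfolding mbeta_topology_def by (rule topology_generated_by_Basis)
  thus ?thesis unfolding Xstar_topology_def openin_subtopology by blast
qed

lemma gen_basis:
  assumes "generate_topology_on {mhat X M A | A. A \<in> M} U"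
  shows "\<forall>p\<in>U. \<exists>A\<in>M. p \<in> mhat X M A \<and> mhat X M A \<subseteq> U"
  using assms
proof induct
  case Empty
  show ?case by simp
next
  case (Int a b)
  show ?case
  proof
    fix p assume "p \<in> a \<inter> b"
    hence "p \<in> a" "p \<in> b" by auto
    then obtain A B where AB: "A \<in> M" "p \<in> mhat X M A" "mhat X M A \<subseteq> a"
       "B \<in> M" "p \<in> mhat X M B" "mhat X M B \<subseteq> b" using Int(2,4) by meson
    have "A \<inter> B \<in> M" using AB(1,4) by (rule S.Int)
    moreover have "mhat X M (A \<inter> B) = mhat X M A \<inter> mhat X M B" by (rule mhat_Int[OF AB(1,4)])
    ultimately show "\<exists>A\<in>M. p \<in> mhat X M A \<and> mhat X M A \<subseteq> a \<inter> b"
      using AB by (intro bexI[of _ "A \<inter> B"]) auto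
  qed
next
  case (UN K)
  show ?case
  proof
    fix p assume "p \<in> \<Union>K"
    then obtain k where k: "k \<in> K" "p \<in> k" by blast
    then obtain A where "A \<in> M" "p \<in> mhat X M A" "mhat X M A \<subseteq> k" using UN(2) by meson
    thus "\<exists>A\<in>M. p \<in> mhat X M A \<and> mhat X M A \<subseteq> \<Union>K" using k(1) by blast
  qed
next
  case (Basis s)
  then obtain A where A: "A \<in> M" "s = mhat X M A" by blast
  show ?case using A by blast
qed

lemma open_basis:
  assumes "openin (Xstar_topology X M) U" "p \<in> U"
  shows "\<exists>A\<in>M. p \<in> mhat X M A \<and> mhat X M A \<inter> Xstar X M \<subseteq> U"
proof -
  obtain V where V: "openin (mbeta_topology X M) V" "U = V \<inter> Xstar X M"
    using assms(1) unfolding Xstar_topology_def openin_subtopology by blast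
  have "generate_topology_on {mhat X M A | A. A \<in> M} V"
    using V(1) unfolding mbeta_topology_def openin_topology_generated_by_iff .
  from gen_basis[OF this] V assms(2) show ?thesis by blast
qed


context
  assumes FA: "\<forall>F. finite F \<and> F \<subseteq> X \<longrightarrow> F \<in> M"
begin

lemma principal:
  assumes u: "m_ultrafilter X M p" and x: "x \<in> X" and sx: "{x} \<in> p"
  shows "p = membed M x"
proof -
  have f: "m_filter X M p" using u by (rule uf_filter)
  have "m_filter X M (membed M x)"
    by (rule mf_intro) (use x S.top in \<open>auto simp: membed_def\<close>)
  moreover have "p \<subseteq> membed M x"
  proof
    fix C assume C: "C \<in> p"
    have "C \<inter> {x} \<in> p" by (rule mf_int[OF f C sx])
    moreover have "C \<in> M" by (rule mf_M[OF f C])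
    moreover have "{} \<notin> p" by (rule mf_empty[OF f])
    ultimately have "C \<inter> {x} \<noteq> {}" "C \<in> M" by metis+
    thus "C \<in> membed M x" unfolding membed_def by blast
  qed
  ultimately show ?thesis by (rule uf_max[OF u, symmetric])
qed

lemma Xstar_no_finite:
  assumes p: "p \<in> Xstar X M" and F: "finite F"
  shows "F \<notin> p"
  using F
proof induct
  case empty
  have "m_ultrafilter X M p" using p unfolding Xstar_def mbeta_def by blast
  thus ?case using mf_empty[OF uf_filter] by blast
next
  case (insert x F)
  have u: "m_ultrafilter X M p" using p unfolding Xstar_def mbeta_def by blast
  have f: "m_filter X M p" using u by (rule uf_filter)
  show ?case
  proof
    assume xF: "insert x F \<in> p"
    have sub: "insert x F \<subseteq> X" using S.sets_into_space[OF mf_M[OF f xF]] .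
    hence sxM: "{x} \<in> M" and FM: "F \<in> M" using FA insert(1) by auto
    show False
    proof (cases "{x} \<in> p")
      case True
      hence "p = membed M x" using principal[OF u] sub by blast
      thus False using p sub unfolding Xstar_def by blast
    next
      case False
      hence "X - {x} \<in> p" using uf_compl[OF u sxM] by blast
      hence "insert x F \<inter> (X - {x}) \<in> p" using mf_int[OF f xF] by blast
      moreover have "insert x F \<inter> (X - {x}) \<subseteq> F" by blast
      ultimately have "F \<in> p" using mf_up[OF f _ FM] by blast
      thus False using insert(3) by blast
    qed
  qed
qed

lemma mhat_nonempty_infinite:
  assumes "p \<in> mhat X M A \<inter> Xstar X M"
  shows "infinite A"
proof
  assume "finite A"
  moreover have "A \<in> p" "p \<in> Xstar X M" using assms unfolding mhat_def by auto
  ultimately show False using Xstar_no_finite by metis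
qed

lemma exists_nonprincipal:
  assumes B: "B \<in> M" and inf: "infinite B"
  shows "\<exists>p. p \<in> mhat X M B \<inter> Xstar X M"
proof -
  define F0 where "F0 = {C\<in>M. finite (B - C)}"
  define \<A> where "\<A> = {q. m_filter X M q \<and> F0 \<subseteq> q}"
  have F0f: "m_filter X M F0"
    unfolding F0_def
  proof (rule mf_intro)
    show "{} \<notin> {C \<in> M. finite (B - C)}" using inf by auto
    have "B - X = {}" using S.sets_into_space[OF B] by blast
    hence "finite (B - X)" by (simp only: finite.emptyI)
    thus "X \<in> {C \<in> M. finite (B - C)}" using S.top by blast
  next
    fix C D assume "C \<in> {C \<in> M. finite (B - C)}" "D \<in> M" "C \<subseteq> D"
    moreover have "B - D \<subseteq> B - C" using \<open>C \<subseteq> D\<close> by blast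
    ultimately have "finite (B - D)" using finite_subset by blast
    thus "D \<in> {C \<in> M. finite (B - C)}" using \<open>D \<in> M\<close> by blast
  next
    fix C D assume "C \<in> {C \<in> M. finite (B - C)}" "D \<in> {C \<in> M. finite (B - C)}"
    moreover have "B - C \<inter> D = (B - C) \<union> (B - D)" by blast
    ultimately show "C \<inter> D \<in> {C \<in> M. finite (B - C)}" by auto
  qed auto
  have "\<exists>p\<in>\<A>. \<forall>q\<in>\<A>. p \<subseteq> q \<longrightarrow> q = p"
  proof (rule Zorn_Lemma2, intro ballI)
    fix C assume C: "C \<in> chains \<A>"
    show "\<exists>U\<in>\<A>. \<forall>Y\<in>C. Y \<subseteq> U"
    proof (cases "C = {}")
      case True thus ?thesis using F0f unfolding \<A>_def by blast
    next
      case False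
      have CA: "C \<subseteq> \<A>" and ch: "\<And>a b. a \<in> C \<Longrightarrow> b \<in> C \<Longrightarrow> a \<subseteq> b \<or> b \<subseteq> a"
        using C unfolding chains_def chain_subset_def by blast+
      have mf: "\<And>c. c \<in> C \<Longrightarrow> m_filter X M c" and F0c: "\<And>c. c \<in> C \<Longrightarrow> F0 \<subseteq> c"
        using CA unfolding \<A>_def by blast+
      have "m_filter X M (\<Union>C)"
      proof (rule mf_intro)
        show "\<Union>C \<subseteq> M" using mf_M[OF mf] by blast
        show "{} \<notin> \<Union>C" using mf_empty[OF mf] by blast
        obtain c where "c \<in> C" using False by blast
        thus "X \<in> \<Union>C" using mf_top[OF mf] by blast
      next
        fix a b assume "a \<in> \<Union>C" "b \<in> M" "a \<subseteq> b"
        then obtain c where "c \<in> C" "a \<in> c" by blast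
        hence "b \<in> c" using mf_up[OF mf \<open>a \<in> c\<close> \<open>b \<in> M\<close> \<open>a \<subseteq> b\<close>] by blast
        thus "b \<in> \<Union>C" using \<open>c \<in> C\<close> by blast
      next
        fix a b assume "a \<in> \<Union>C" "b \<in> \<Union>C"
        then obtain c d where cd: "c \<in> C" "d \<in> C" "a \<in> c" "b \<in> d" by blast
        show "a \<inter> b \<in> \<Union>C"
        proof (cases "c \<subseteq> d")
          case True
          hence "a \<in> d" using cd by blast
          hence "a \<inter> b \<in> d" using mf_int[OF mf[OF cd(2)] _ cd(4)] by blast
          thus ?thesis using cd by blast
        next
          case False
          hence "d \<subseteq> c" using ch cd by blast
          hence "b \<in> c" using cd by blast
          hence "a \<inter> b \<in> c" using mf_int[OF mf[OF cd(1)] cd(3)] by blast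
          thus ?thesis using cd by blast
        qed
      qed
      moreover have "F0 \<subseteq> \<Union>C" using F0c False by blast
      ultimately show ?thesis unfolding \<A>_def by blast
    qed
  qed
  then obtain p where pA: "p \<in> \<A>" and pmax: "\<forall>q\<in>\<A>. p \<subseteq> q \<longrightarrow> q = p" by blast
  have u: "m_ultrafilter X M p"
    unfolding m_ultrafilter_def
  proof (intro conjI allI impI)
    show "m_filter X M p" using pA unfolding \<A>_def by blast
    fix q assume q: "m_filter X M q \<and> p \<subseteq> q"
    hence "q \<in> \<A>" using pA unfolding \<A>_def by blast
    thus "q = p" using pmax q by blast
  qed
  have "B \<in> p" using pA B unfolding \<A>_def F0_def by auto
  moreover have "p \<notin> membed M ` X"
  proof
    assume "p \<in> membed M ` X"
    then obtain x where x: "x \<in> X" "p = membed M x" by blast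
    have "X - {x} \<in> M" using FA x(1) by auto
    moreover have "finite (B - (X - {x}))"
      by (rule finite_subset[of _ "{x}"]) (use S.sets_into_space[OF B] in auto)
    ultimately have "X - {x} \<in> p" using pA unfolding \<A>_def F0_def by blast
    thus False using x(2) unfolding membed_def by blast
  qed
  ultimately have "p \<in> mhat X M B \<inter> Xstar X M"
    using u unfolding mhat_def Xstar_def mbeta_def by blast
  thus ?thesis by blast
qed

lemma pseudo:
  assumes AM: "\<And>n. A n \<in> M" and Ainf: "\<And>n. infinite (A n)"
    and dec: "\<And>n. A (Suc n) \<subseteq> A n"
  shows "\<exists>B\<in>M. infinite B \<and> (\<forall>n. finite (B - A n))"
proof -
  define nx where "nx = (\<lambda>n G. SOME x. x \<in> A n \<and> x \<notin> G)"
  define F where "F = rec_nat {} (\<lambda>n G. insert (nx n G) G)"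
  have F0: "F 0 = {}" and FS: "\<And>n. F (Suc n) = insert (nx n (F n)) (F n)"
    by (simp_all add: F_def)
  have fin: "finite (F n)" for n by (induct n) (simp_all add: F0 FS)
  have nxp: "nx n (F n) \<in> A n \<and> nx n (F n) \<notin> F n" for n
  proof -
    have "A n - F n \<noteq> {}" using Ainf[of n] fin[of n] by (metis Diff_infinite_finite finite.emptyI)
    hence "\<exists>x. x \<in> A n \<and> x \<notin> F n" by blast
    thus ?thesis unfolding nx_def by (rule someI_ex)
  qed
  have card: "card (F n) = n" for n
    by (induct n) (simp_all add: F0 FS fin nxp)
  have AX: "A n \<subseteq> X" for n using S.sets_into_space[OF AM] .
  have FX: "F n \<subseteq> X" for n
    by (induct n) (use nxp AX in \<open>auto simp: F0 FS\<close>)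
  have Adec: "n \<le> m \<Longrightarrow> A m \<subseteq> A n" for n m
    by (induct m rule: dec_induct) (use dec in blast)+
  have Finc: "n \<le> m \<Longrightarrow> F n \<subseteq> F m" for n m
    by (induct m rule: dec_induct) (auto simp: FS)
  have Fdiff: "n \<le> m \<Longrightarrow> F m - F n \<subseteq> A n" for n m
  proof (induct m rule: dec_induct)
    case (step m)
    have "nx m (F m) \<in> A n" using nxp[of m] Adec[OF step(1)] by blast
    thus ?case using step(3) by (auto simp: FS)
  qed simp
  define B where "B = (\<Union>n. F n)"
  have "B \<in> M" unfolding B_def using FA fin FX by (intro S.countable_nat_UN) blast
  moreover have "infinite B"
  proof
    assume "finite B"
    moreover have "F (Suc (card B)) \<subseteq> B" unfolding B_def by blast
    ultimately have "card (F (Suc (card B))) \<le> card B" by (rule card_mono)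
    thus False using card by simp
  qed
  moreover have "finite (B - A n)" for n
  proof (rule finite_subset[OF _ fin[of n]])
    show "B - A n \<subseteq> F n"
    proof
      fix x assume "x \<in> B - A n"
      then obtain m where "x \<in> F m" "x \<notin> A n" unfolding B_def by blast
      thus "x \<in> F n"
        using Finc[of m n] Fdiff[of n m] by (cases "m \<le> n") auto
    qed
  qed
  ultimately show ?thesis by blast
qed

lemma pseudo_hat:
  assumes BM: "B \<in> M" and AM: "A \<in> M" and fin: "finite (B - A)"
  shows "mhat X M B \<inter> Xstar X M \<subseteq> mhat X M A"
proof
  fix p assume p: "p \<in> mhat X M B \<inter> Xstar X M"
  hence u: "m_ultrafilter X M p" and Bp: "B \<in> p" unfolding mhat_def mbeta_def by auto
  have f: "m_filter X M p" using u by (rule uf_filter)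
  have "B - A \<in> M" using FA fin S.sets_into_space[OF BM] by blast
  moreover have "B \<inter> A \<in> M" using BM AM by blast
  moreover have "(B \<inter> A) \<union> (B - A) \<in> p" using Bp by (metis Int_Diff_Un)
  ultimately have "B \<inter> A \<in> p \<or> B - A \<in> p" using uf_prime[OF u] by blast
  moreover have "B - A \<notin> p" using Xstar_no_finite p fin by blast
  ultimately have "B \<inter> A \<in> p" by blast
  hence "A \<in> p" using mf_up[OF f _ AM] by blast
  thus "p \<in> mhat X M A" using p unfolding mhat_def by blast
qed

lemma step_lemma:
  assumes N: "nowhere_dense (Xstar_topology X M) N" and AM: "A \<in> M" and inf: "infinite A"
  shows "\<exists>B\<in>M. B \<subseteq> A \<and> infinite B \<and> mhat X M B \<inter> Xstar X M \<inter> N = {}"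
proof -
  let ?T = "Xstar_topology X M"
  define U where "U = mhat X M A \<inter> Xstar X M"
  have Uo: "openin ?T U" unfolding U_def by (rule basic_open[OF AM])
  have "U \<noteq> {}" unfolding U_def using exists_nonprincipal[OF AM inf] by blast
  have "\<not> U \<subseteq> ?T closure_of N"
  proof
    assume "U \<subseteq> ?T closure_of N"
    hence "U \<subseteq> ?T interior_of (?T closure_of N)" using interior_of_maximal Uo by blast
    thus False using N \<open>U \<noteq> {}\<close> unfolding nowhere_dense_def by blast
  qed
  then obtain q where q: "q \<in> U - ?T closure_of N" by blast
  have "openin ?T (U - ?T closure_of N)" using Uo by (intro openin_diff) auto
  from open_basis[OF this q] obtain C where C: "C \<in> M" "q \<in> mhat X M C"
    "mhat X M C \<inter> Xstar X M \<subseteq> U - ?T closure_of N" by blast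
  have qX: "q \<in> Xstar X M" using q unfolding U_def by blast
  have BM: "A \<inter> C \<in> M" using AM C(1) by blast
  have "q \<in> mhat X M (A \<inter> C) \<inter> Xstar X M"
    using mhat_Int[OF AM C(1)] q C(2) qX unfolding U_def by blast
  hence "infinite (A \<inter> C)" by (rule mhat_nonempty_infinite)
  moreover have "N \<subseteq> ?T closure_of N"
    using N closure_of_subset unfolding nowhere_dense_def by blast
  ultimately show ?thesis using BM C(3) mhat_Int[OF AM C(1)]
    by (intro bexI[of _ "A \<inter> C"]) blast+
qed

end
end

theorem theorem3p3:
  fixes X :: "'a set" and M :: "'a set set" and \<N> :: "'a set set set set"
  assumes "sigma_algebra X M"
    and "infinite M"
    and "\<forall>F. finite F \<and> F \<subseteq> X \<longrightarrow> F \<in> M"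
    and "countable \<N>"
    and "\<forall>N\<in>\<N>. nowhere_dense (Xstar_topology X M) N"
  shows "nowhere_dense (Xstar_topology X M) (\<Union>\<N>)"
proof -
  note sa = assms(1) and FA = assms(3)
  interpret S: sigma_algebra X M by (rule sa)
  let ?T = "Xstar_topology X M"
  let ?Xs = "Xstar X M"
  obtain f :: "nat \<Rightarrow> 'a set set set" where
    f: "\<Union>\<N> \<subseteq> \<Union>(range f)" "\<And>n. nowhere_dense ?T (f n)"
  proof (cases "\<N> = {}")
    case True
    show ?thesis
      by (rule that[of "\<lambda>_. {}"]) (auto simp: True nowhere_dense_def)
  next
    case False
    show ?thesis
      by (rule that[of "from_nat_into \<N>"])
         (use False assms(4,5) from_nat_into[OF False] in \<open>auto simp: range_from_nat_into\<close>)
  qed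
  have Ssub: "\<Union>\<N> \<subseteq> topspace ?T" using assms(5) unfolding nowhere_dense_def by blast
  have "?T interior_of (?T closure_of \<Union>\<N>) = {}"
  proof (rule ccontr)
    assume "?T interior_of (?T closure_of \<Union>\<N>) \<noteq> {}"
    then obtain p where p: "p \<in> ?T interior_of (?T closure_of \<Union>\<N>)" by blast
    have O: "openin ?T (?T interior_of (?T closure_of \<Union>\<N>))" by simp
    obtain A0 where A0: "A0 \<in> M" "p \<in> mhat X M A0"
      "mhat X M A0 \<inter> ?Xs \<subseteq> ?T interior_of (?T closure_of \<Union>\<N>)"
      using open_basis[OF sa O p] by blast
    have "p \<in> topspace ?T" using p interior_of_subset_topspace by (rule subsetD[rotated])
    hence pX: "p \<in> ?Xs" unfolding topspace_Xstar[OF sa] .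
    have "p \<in> mhat X M A0 \<inter> ?Xs" using A0(2) pX by (rule IntI)
    hence inf0: "infinite A0" by (rule mhat_nonempty_infinite[OF sa FA])
    define nxt where "nxt = (\<lambda>n A. SOME B. B \<in> M \<and> B \<subseteq> A \<and> infinite B \<and>
        mhat X M B \<inter> ?Xs \<inter> f n = {})"
    have P: "nxt n B \<in> M \<and> nxt n B \<subseteq> B \<and> infinite (nxt n B) \<and>
        mhat X M (nxt n B) \<inter> ?Xs \<inter> f n = {}" if "B \<in> M" "infinite B" for n B
    proof -
      have "\<exists>C. C \<in> M \<and> C \<subseteq> B \<and> infinite C \<and> mhat X M C \<inter> ?Xs \<inter> f n = {}"
        using step_lemma[OF sa FA f(2)[of n] that] by blast
      thus ?thesis unfolding nxt_def by (rule someI_ex)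
    qed
    define A where "A = rec_nat A0 nxt"
    have A0': "A 0 = A0" and AS: "\<And>n. A (Suc n) = nxt n (A n)" by (simp_all add: A_def)
    have inv: "A n \<in> M \<and> infinite (A n)" for n
      by (induct n) (use A0 inf0 P in \<open>auto simp: A0' AS\<close>)
    have AM: "\<And>n. A n \<in> M" and Ainf: "\<And>n. infinite (A n)" using inv by auto
    have dec: "\<And>n. A (Suc n) \<subseteq> A n" using P inv by (simp add: AS)
    have disj: "\<And>n. mhat X M (A (Suc n)) \<inter> ?Xs \<inter> f n = {}" using P inv by (simp add: AS)
    obtain B where B: "B \<in> M" "infinite B" "\<And>n. finite (B - A n)"
      using pseudo[where A=A, OF sa FA AM Ainf dec] by blast
    have sub: "mhat X M B \<inter> ?Xs \<subseteq> mhat X M (A n)" for n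
      using pseudo_hat[OF sa FA B(1) AM B(3)] .
    obtain q where q: "q \<in> mhat X M B \<inter> ?Xs" using exists_nonprincipal[OF sa FA B(1,2)] by blast
    have "q \<in> ?T interior_of (?T closure_of \<Union>\<N>)"
      using sub[of 0] q A0(3) by (auto simp: A0')
    hence qc: "q \<in> ?T closure_of \<Union>\<N>" by (rule subsetD[OF interior_of_subset])
    have Vo: "openin ?T (mhat X M B \<inter> ?Xs)" by (rule basic_open[OF sa B(1)])
    have "(mhat X M B \<inter> ?Xs) \<inter> \<Union>\<N> = {}"
    proof (rule ccontr)
      assume "(mhat X M B \<inter> ?Xs) \<inter> \<Union>\<N> \<noteq> {}"
      then obtain x where xx: "x \<in> (mhat X M B \<inter> ?Xs) \<inter> \<Union>\<N>" by blast
      have x1: "x \<in> mhat X M B \<inter> ?Xs" using xx by (rule IntD1)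
      have x2: "x \<in> \<Union>\<N>" using xx by (rule IntD2)
      have "x \<in> \<Union>(range f)" using x2 f(1) by (rule subsetD[rotated])
      then obtain n where x: "x \<in> f n" by (rule UN_E)
      have "x \<in> mhat X M (A (Suc n))" using x1 sub[of "Suc n"] by (rule subsetD[rotated])
      moreover have "x \<in> ?Xs" using x1 by (rule IntD2)
      ultimately have "x \<in> mhat X M (A (Suc n)) \<inter> ?Xs \<inter> f n" using x by (intro IntI)
      thus False using disj[of n] by (simp only: empty_iff)
    qed
    hence "(mhat X M B \<inter> ?Xs) \<inter> ?T closure_of \<Union>\<N> = {}"
      by (rule openin_Int_closure_of_eq_empty[OF Vo, THEN iffD2])
    moreover have "q \<in> (mhat X M B \<inter> ?Xs) \<inter> ?T closure_of \<Union>\<N>" using q qc by (rule IntI)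
    ultimately show False by (simp only: empty_iff)
  qed
  thus ?thesis unfolding nowhere_dense_def by (rule conjI[OF Ssub])
qed

end
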